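(* For every integer $r\ge0$, $$\sum_{i=1}^\infty(a_{i+1}-a_i)\,i^r\le 2\,r!,$$ where $a_i=(1-2^{1-2i})\zeta(2i)$ and $\zeta$ is the Riemann zeta function.
   Context: $\zeta$ denotes the Riemann zeta function. *)

theory Defs
  imports "HOL-Analysis.Analysis"
begin

definition zeta :: "real \<Rightarrow> real" where
  "zeta s = (\<Sum>n. 1 / (real (Suc n)) powr s)"

definition a_seq :: "nat \<Rightarrow> real" where
  "a_seq i = (1 - 2 powr (1 - 2 * real i)) * zeta (2 * real i)"

end

theory Submission
  imports Defs
begin
lemma pow_le_exp: fixes x :: real assumes "x \<ge> 0" shows "x ^ r \<le> fact r * exp x"
proof -
  have s: "(\<lambda>n. x^n / fact n) sums exp x" using exp_converges[of x] by (simp add: divide_simps)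
  have "x^r / fact r \<le> exp x"
    using sum_le_suminf[OF sums_summable[OF s], of "{r}"] s assms by (auto simp: sums_iff)
  then show ?thesis by (simp add: divide_simps mult.commute)
qed
lemma two_powr: "2 powr (1 - 2 * real k) = 2 / 4 ^ k"
proof -
  have "2 powr (1 - 2 * real k) = 2 powr 1 / 2 powr (2 * real k)" by (rule powr_diff)
  also have "2 powr (2 * real k) = (2::real) ^ (2*k)" using powr_realpow[of 2 "2*k"] by simp
  also have "(2::real) ^ (2*k) = 4 ^ k" by (simp add: power_mult)
  finally show ?thesis by simp
qed
lemma zeta_nat: assumes "k \<ge> 1"
  shows "(\<lambda>n. 1 / real (Suc n) ^ (2*k)) sums zeta (2 * real k)"
proof -
  have eq: "\<And>n. 1 / real (Suc n) powr (2 * real k) = 1 / real (Suc n) ^ (2*k)"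
    using powr_realpow[of "real (Suc _)" "2*k"] by simp
  have "summable (\<lambda>n. inverse (real n ^ (2*k)))" by (rule inverse_power_summable) (use assms in auto)
  then have "summable (\<lambda>n. inverse (real (Suc n) ^ (2*k)))" using summable_Suc_iff[of "\<lambda>n. inverse (real n ^ (2*k))"] by simp
  then have "summable (\<lambda>n. 1 / real (Suc n) ^ (2*k))" by (simp add: divide_inverse)
  then show ?thesis unfolding zeta_def eq by (simp add: summable_sums)
qed

definition F :: "nat \<Rightarrow> nat \<Rightarrow> real" where "F k n = 1 / real (Suc n) ^ (2*k)"

lemma a_rep: assumes "k \<ge> 1"
  shows "(\<lambda>m. F k (2*m) - F k (2*m+1)) sums a_seq k"
proof -
  define Z where "Z = zeta (2 * real k)"
  have s: "F k sums Z" using zeta_nat[OF assms] unfolding F_def Z_def by simp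
  have g: "(\<lambda>m. F k (2*m) + F k (2*m+1)) sums Z"
    using sums_group[OF s, of 2] by (simp add: mult.commute)
  have aux: "(2*y)^(2*k) = 4^k * y^(2*k)" for y :: real
    by (simp add: power_mult power_mult_distrib)
  have odd: "F k (2*m+1) = (1/4^k) * F k m" for m
  proof -
    have "real (Suc (2*m+1)) = 2 * real (Suc m)" by simp
    then have "real (Suc (2*m+1)) ^ (2*k) = (2 * real (Suc m)) ^ (2*k)" by simp
    also have "\<dots> = 4^k * real (Suc m) ^ (2*k)"
      using aux[of "real (Suc m)"] by simp
    finally have "real (Suc (2*m+1)) ^ (2*k) = 4^k * real (Suc m) ^ (2*k)" .
    then show ?thesis unfolding F_def by simp
  qed
  have o: "(\<lambda>m. F k (2*m+1)) sums ((1/4^k) * Z)"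
    unfolding odd by (rule sums_mult[OF s])
  have "(\<lambda>m. (F k (2*m) + F k (2*m+1)) - 2 * F k (2*m+1)) sums (Z - 2 * ((1/4^k) * Z))"
    by (rule sums_diff[OF g sums_mult[OF o]])
  moreover have "Z - 2 * ((1/4^k) * Z) = a_seq k"
    unfolding a_seq_def Z_def two_powr by (simp add: algebra_simps)
  ultimately show ?thesis by simp
qed

lemma c_mono:
  fixes x :: real and k :: nat
  assumes "x \<ge> 2" "k \<ge> 1"
  shows "1/(x+1)^(2*k) - 1/(x+1)^(2*k+2) \<le> 1/x^(2*k) - 1/x^(2*k+2)"
proof -
  define u where "u = x^2"
  define v where "v = (x+1)^2"
  have u: "u \<ge> 4" unfolding u_def using assms power_mono[of 2 x 2] by simp
  have uv: "v \<ge> u + 1" unfolding u_def v_def using assms by (simp add: power2_eq_square algebra_simps)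
  have p1: "x^(2*k) = u^k" unfolding u_def by (simp add: power_mult)
  have p2: "x^(2*k+2) = u^k * u" unfolding u_def by (simp add: power_mult power_add power2_eq_square)
  have p3: "(x+1)^(2*k) = v^k" unfolding v_def by (simp add: power_mult)
  have p4: "(x+1)^(2*k+2) = v^k * v" unfolding v_def by (simp add: power_mult power_add power2_eq_square)
  have up: "u^k > 0" using u by simp
  have q: "v^k \<ge> u^k * (v/u)"
  proof -
    have "(v/u)^k \<ge> (v/u)^1" using assms uv u by (intro power_increasing) (auto simp: field_simps)
    then have "v^k / u^k \<ge> v/u" by (simp add: power_divide)
    then show ?thesis using up by (simp add: field_simps)
  qed
  have key: "v^2*(u-1) \<ge> u^2*(v-1)"
  proof -
    have "v^2*(u-1) - u^2*(v-1) = (v-u)*(u* v-u-v)" by (simp add: power2_eq_square algebra_simps)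
    moreover have "u* v - u - v \<ge> 0"
    proof -
      have "u* v \<ge> 2* v" using u uv by (intro mult_right_mono) auto
      moreover have "v \<ge> u" using uv by simp
      ultimately show ?thesis by linarith
    qed
    moreover have "v - u \<ge> 0" using uv by simp
    ultimately show ?thesis by (metis diff_ge_0_iff_ge mult_nonneg_nonneg)
  qed
  have "1/v^k - 1/(v^k* v) = (v-1)/(v^k* v)" using u uv by (simp add: field_simps)
  also have "\<dots> \<le> (u-1)/(u^k*u)"
  proof -
    have vk: "v^k > 0" using u uv by simp
    have "(v-1)*(u^k*u) \<le> (u-1)*(v^k* v)"
    proof -
      have "(u-1)*(v^k* v) \<ge> (u-1)*((u^k*(v/u))* v)"
        using q u uv by (intro mult_left_mono mult_right_mono) auto
      also have "(u-1)*((u^k*(v/u))* v) = u^k * (v^2*(u-1)) / u" by (simp add: power2_eq_square field_simps)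
      also have "\<dots> \<ge> u^k * (u^2*(v-1)) / u" using key up u by (intro divide_right_mono mult_left_mono) auto
      also have "u^k * (u^2*(v-1)) / u = (v-1)*(u^k*u)" using u by (simp add: power2_eq_square field_simps)
      finally show ?thesis by simp
    qed
    then show ?thesis using vk up u uv by (simp add: divide_simps)
  qed
  also have "\<dots> = 1/u^k - 1/(u^k*u)" using u by (simp add: field_simps)
  finally show ?thesis unfolding p1 p2 p3 p4 .
qed

definition c :: "nat \<Rightarrow> nat \<Rightarrow> real" where "c k n = F k n - F (Suc k) n"

lemma F_nonneg: "F k n \<ge> 0" unfolding F_def by simp

lemma F_anti: "m \<le> n \<Longrightarrow> F k n \<le> F k m"
  unfolding F_def by (intro divide_left_mono power_mono) auto

lemma c_nonneg: "c k n \<ge> 0"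
proof -
  have "real (Suc n) ^ (2*k) \<le> real (Suc n) ^ (2*Suc k)" by (intro power_increasing) auto
  then show ?thesis unfolding c_def F_def by (intro diff_ge_0_iff_ge[THEN iffD2] divide_left_mono) auto
qed

lemma c_le: "c k n \<le> F k n" unfolding c_def using F_nonneg[of "Suc k" n] by simp

lemma c_0: "c k 0 = 0" unfolding c_def F_def by simp

lemma c_dec: assumes "k \<ge> 1" "n \<ge> 1" shows "c k (Suc n) \<le> c k n"
proof -
  define x where "x = real (Suc n)"
  have x: "x \<ge> 2" unfolding x_def using assms by simp
  have "c k (Suc n) = 1/(x+1)^(2*k) - 1/(x+1)^(2*k+2)" unfolding c_def F_def x_def by simp
  moreover have "c k n = 1/x^(2*k) - 1/x^(2*k+2)" unfolding c_def F_def x_def by simp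
  ultimately show ?thesis using c_mono[OF x assms(1)] by simp
qed

lemma F_summable: "k \<ge> 1 \<Longrightarrow> summable (F k)"
  using zeta_nat unfolding F_def by (metis sums_summable)

lemma d_bounds: assumes "k \<ge> 1"
  shows "0 \<le> a_seq (Suc k) - a_seq k \<and> a_seq (Suc k) - a_seq k \<le> (3/4) / 4^k"
proof -
  define d where "d = a_seq (Suc k) - a_seq k"
  have "(\<lambda>m. (F (Suc k) (2*m) - F (Suc k) (2*m+1)) - (F k (2*m) - F k (2*m+1))) sums d"
    unfolding d_def using a_rep[of "Suc k"] a_rep[OF assms] by (intro sums_diff) auto
  then have sd: "(\<lambda>m. c k (2*m+1) - c k (2*m)) sums d"
    unfolding c_def by (simp add: algebra_simps)
  have sF: "summable (F k)" using F_summable[OF assms] .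
  have s1: "summable (\<lambda>m. c k (2*m+1))"
  proof (rule summable_comparison_test[OF _ sF], intro exI[of _ 0] allI impI)
    fix m :: nat
    have "c k (2*m+1) \<le> F k (2*m+1)" by (rule c_le)
    also have "\<dots> \<le> F k m" by (rule F_anti) simp
    finally show "norm (c k (2*m+1)) \<le> F k m" using c_nonneg[of k "2*m+1"] by simp
  qed
  have s2: "summable (\<lambda>m. c k (2*m+2))"
  proof (rule summable_comparison_test[OF _ sF], intro exI[of _ 0] allI impI)
    fix m :: nat
    have "c k (2*m+2) \<le> F k (2*m+2)" by (rule c_le)
    also have "\<dots> \<le> F k m" by (rule F_anti) simp
    finally show "norm (c k (2*m+2)) \<le> F k m" using c_nonneg[of k "2*m+2"] by simp
  qed
  define A where "A = (\<Sum>m. c k (2*m+1))"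
  define B where "B = (\<Sum>m. c k (2*m+2))"
  have A: "(\<lambda>m. c k (2*m+1)) sums A" using s1 A_def summable_sums by blast
  have B: "(\<lambda>m. c k (2*m+2)) sums B" using s2 B_def summable_sums by blast
  have B0: "(\<lambda>m. c k (2*m)) sums B"
    using B sums_Suc_iff[of "\<lambda>m. c k (2*m)" B] by (simp add: c_0)
  have "(\<lambda>m. c k (2*m+1) - c k (2*m)) sums (A - B)" by (rule sums_diff[OF A B0])
  then have dAB: "d = A - B" using sd sums_unique2 by blast
  have AB: "(\<lambda>m. c k (2*m+1) - c k (2*m+2)) sums (A - B)" by (rule sums_diff[OF A B])
  have "0 \<le> A - B"
  proof (rule sums_le[OF _ sums_zero AB])
    fix m show "0 \<le> c k (2*m+1) - c k (2*m+2)" using c_dec[OF assms, of "2*m+1"] by simp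
  qed
  have A3: "(\<lambda>m. c k (2*m+3)) sums (A - c k 1)"
    using A sums_Suc_iff[of "\<lambda>m. c k (2*m+1)" "A - c k 1"] by (simp add: numeral_3_eq_3)
  have AB3: "(\<lambda>m. c k (2*m+3) - c k (2*m+2)) sums (A - c k 1 - B)" by (rule sums_diff[OF A3 B])
  have "A - c k 1 - B \<le> 0"
  proof (rule sums_le[OF _ AB3 sums_zero])
    fix m show "c k (2*m+3) - c k (2*m+2) \<le> 0" using c_dec[OF assms, of "2*m+2"]
      by (simp add: numeral_3_eq_3)
  qed
  moreover have "c k 1 = (3/4)/4^k"
  proof -
    have "F k 1 = 1/4^k" unfolding F_def by (simp add: power_mult)
    moreover have "F (Suc k) 1 = 1/(4*4^k)" unfolding F_def by (simp add: power_mult)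
    ultimately show ?thesis unfolding c_def by simp
  qed
  ultimately show ?thesis using \<open>0 \<le> A - B\<close> dAB d_def by simp
qed

theorem lemma4p4:
  fixes r :: nat
  shows "summable (\<lambda>i. (a_seq (Suc i + 1) - a_seq (Suc i)) * real (Suc i) ^ r)
    \<and> (\<Sum>i. (a_seq (Suc i + 1) - a_seq (Suc i)) * real (Suc i) ^ r) \<le> 2 * fact r"
proof -
  define q :: real where "q = exp 1 / 4"
  have q0: "0 < q" and q1: "q < 68/100" unfolding q_def using e_less_272 by auto
  define g where "g i = (3/4) * fact r * q ^ Suc i" for i
  have fg: "0 \<le> (a_seq (Suc i + 1) - a_seq (Suc i)) * real (Suc i) ^ r
      \<and> (a_seq (Suc i + 1) - a_seq (Suc i)) * real (Suc i) ^ r \<le> g i" for i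
  proof -
    have db: "0 \<le> a_seq (Suc (Suc i)) - a_seq (Suc i)" "a_seq (Suc (Suc i)) - a_seq (Suc i) \<le> (3/4) / 4^Suc i"
      using d_bounds[of "Suc i"] by auto
    have pe: "real (Suc i) ^ r \<le> fact r * exp 1 ^ Suc i"
      using pow_le_exp[of "real (Suc i)" r] exp_of_nat_mult[of "Suc i" "1::real"] by simp
    have "(a_seq (Suc (Suc i)) - a_seq (Suc i)) * real (Suc i) ^ r \<le> (3/4) / 4^Suc i * (fact r * exp 1 ^ Suc i)"
      using db pe by (intro mult_mono) auto
    also have "\<dots> = g i" unfolding g_def q_def by (simp add: power_divide)
    finally show ?thesis using db by simp
  qed
  have gs: "g sums ((3/4) * fact r * (q / (1 - q)))"
  proof -
    have "(\<lambda>i. q ^ i) sums (1 / (1 - q))" using q0 q1 by (intro geometric_sums) auto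
    then have "(\<lambda>i. q * q ^ i) sums (q * (1 / (1 - q)))" by (rule sums_mult)
    then have "(\<lambda>i. (3/4) * fact r * (q * q ^ i)) sums ((3/4) * fact r * (q * (1 / (1 - q))))" by (rule sums_mult)
    then show ?thesis unfolding g_def by simp
  qed
  have summ: "summable (\<lambda>i. (a_seq (Suc i + 1) - a_seq (Suc i)) * real (Suc i) ^ r)"
    by (rule summable_comparison_test[OF _ sums_summable[OF gs]]) (use fg in auto)
  have "(\<Sum>i. (a_seq (Suc i + 1) - a_seq (Suc i)) * real (Suc i) ^ r) \<le> (3/4) * fact r * (q / (1 - q))"
    using suminf_le[OF _ summ sums_summable[OF gs]] fg sums_unique[OF gs] by auto
  also have "\<dots> \<le> 2 * fact r"
  proof -
    have "(3/4) * (q / (1 - q)) \<le> 2" using q0 q1 by (simp add: field_simps)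
    then show ?thesis using mult_right_mono[of "(3/4) * (q / (1 - q))" 2 "fact r"] by (simp add: algebra_simps)
  qed
  finally show ?thesis using summ by simp
qed
end
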